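(* $\mathsf{DFD}^{\neq\emptyset}$ has the finite model property with respect to its general relational models: for every formula $\varphi\in\mathcal{L}^{\neq\emptyset}$, if $\varphi$ is satisfied at some state of some general relational model of $\mathsf{DFD}^{\neq\emptyset}$, then $\varphi$ is satisfied at some state of a finite general relational model of $\mathsf{DFD}^{\neq\emptyset}$.
   Context: Vocabulary: finite set $V$ of basic variables and predicate symbols with arities. Terms: $v\in V$, and $\bigcirc x$ for a term $x$. Formulas of $\mathcal{L}^{\neq\emptyset}$: $P(x_1,\dots,x_k)$, $\neg\varphi$, $\varphi\wedge\psi$, $\bigcirc\varphi$, $\mathsf{D}_X\varphi$, $D_Xy$ where $X$ ranges over finite non-empty sets of terms. $\bigcirc X=\{\bigcirc x:x\in X\}$. A general relational model of $\mathsf{DFD}^{\neq\emptyset}$ is $(W,g,=_X,\|\cdot\|)_X$: $W$ non-empty; $g:W\to W$; for each finite non-empty set $X$ of terms a binary relation $=_X$ on $W$; $\|\cdot\|$ maps atoms $P(x_1,\dots,x_n)$ and $D_Xy$ ($X$ non-empty) to subsets of $W$ (write $s\vDash\alpha$ for $s\in\|\alpha\|$, and $s\vDash D_XY$ iff $s\vDash D_Xy$ for all $y\in Y$). For all non-empty finite $X,Y,Z$: (C2) $=_X$ is an equivalence relation; (C3) $s\vDash D_Xx$ for $x\in X$; $s\vDash D_XY$ and $s\vDash D_YZ$ imply $s\vDash D_XZ$; $s\vDash D_V\bigcirc x$ for all terms $x$; (C4) $s=_Xw$ and $s\vDash D_XY$ imply $w\vDash D_XY$ and $s=_Yw$; (C5)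 $s=_Xw$, $s\vDash P(x_1,\dots,x_n)$ with $x_i\in X$ imply $w\vDash P(x_1,\dots,x_n)$; (C6) $s\vDash P(\bigcirc x_1,\dots,\bigcirc x_n)$ iff $g(s)\vDash P(x_1,\dots,x_n)$; (C7) $s=_{\bigcirc X}w$ implies $g(s)=_Xg(w)$; (C8) $g(s)\vDash D_XY$ implies $s\vDash D_{\bigcirc X}\bigcirc Y$. Truth: atoms via $\|\cdot\|$; Boolean as usual; $s\vDash\bigcirc\varphi$ iff $g(s)\vDash\varphi$; $s\vDash\mathsf{D}_X\varphi$ iff every $t$ with $s=_Xt$ satisfies $\varphi$. The model is finite if $W$ is finite. *)

theory Defs
  imports Main
begin

datatype 'v trm = Var 'v | Nx "'v trm"

datatype ('v, 'p) fm =
    Pred 'p "'v trm list"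
  | Neg "('v, 'p) fm"
  | Conj "('v, 'p) fm" "('v, 'p) fm"
  | Next "('v, 'p) fm"
  | DMod "'v trm set" "('v, 'p) fm"
  | Dep "'v trm set" "'v trm"

definition fne :: "'a set \<Rightarrow> bool" where
  "fne X \<longleftrightarrow> finite X \<and> X \<noteq> {}"

fun wf_fm :: "('p \<Rightarrow> nat) \<Rightarrow> ('v, 'p) fm \<Rightarrow> bool" where
  "wf_fm ar (Pred P xs) = (length xs = ar P)"
| "wf_fm ar (Neg \<phi>) = wf_fm ar \<phi>"
| "wf_fm ar (Conj \<phi> \<psi>) = (wf_fm ar \<phi> \<and> wf_fm ar \<psi>)"
| "wf_fm ar (Next \<phi>) = wf_fm ar \<phi>"
| "wf_fm ar (DMod X \<phi>) = (fne X \<and> wf_fm ar \<phi>)"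
| "wf_fm ar (Dep X y) = fne X"

definition depS :: "('v trm set \<Rightarrow> 'v trm \<Rightarrow> 'w set) \<Rightarrow> 'w \<Rightarrow> 'v trm set \<Rightarrow> 'v trm set \<Rightarrow> bool" where
  "depS VD s X Y \<longleftrightarrow> (\<forall>y\<in>Y. s \<in> VD X y)"

text \<open>General relational model (W, g, =_X, ||.||) of DFD^{not empty};
  E X is the relation =_X, VP and VD the valuation of the atoms P(xs) and D_X y.\<close>
definition gen_model ::
  "('p \<Rightarrow> nat) \<Rightarrow> 'w set \<Rightarrow> ('w \<Rightarrow> 'w) \<Rightarrow> ('v trm set \<Rightarrow> ('w \<times> 'w) set)
   \<Rightarrow> ('p \<Rightarrow> 'v trm list \<Rightarrow> 'w set) \<Rightarrow> ('v trm set \<Rightarrow> 'v trm \<Rightarrow> 'w set) \<Rightarrow> bool" where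
  "gen_model ar W g E VP VD \<longleftrightarrow>
     W \<noteq> {} \<and> (\<forall>s\<in>W. g s \<in> W)
   \<and> (\<forall>P xs. length xs = ar P \<longrightarrow> VP P xs \<subseteq> W)
   \<and> (\<forall>X y. fne X \<longrightarrow> VD X y \<subseteq> W)
   \<comment> \<open>C2\<close>
   \<and> (\<forall>X. fne X \<longrightarrow> equiv W (E X))
   \<comment> \<open>C3\<close>
   \<and> (\<forall>X s x. fne X \<longrightarrow> s \<in> W \<longrightarrow> x \<in> X \<longrightarrow> s \<in> VD X x)
   \<and> (\<forall>X Y Z s. fne X \<longrightarrow> fne Y \<longrightarrow> fne Z \<longrightarrow> s \<in> W \<longrightarrow>
         depS VD s X Y \<longrightarrow> depS VD s Y Z \<longrightarrow> depS VD s X Z)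
   \<and> (\<forall>s x. s \<in> W \<longrightarrow> s \<in> VD (range Var) (Nx x))
   \<comment> \<open>C4\<close>
   \<and> (\<forall>X Y s w. fne X \<longrightarrow> fne Y \<longrightarrow> s \<in> W \<longrightarrow> w \<in> W \<longrightarrow> (s, w) \<in> E X \<longrightarrow>
         depS VD s X Y \<longrightarrow> depS VD w X Y \<and> (s, w) \<in> E Y)
   \<comment> \<open>C5\<close>
   \<and> (\<forall>X s w P xs. fne X \<longrightarrow> s \<in> W \<longrightarrow> w \<in> W \<longrightarrow> length xs = ar P \<longrightarrow>
         (s, w) \<in> E X \<longrightarrow> s \<in> VP P xs \<longrightarrow> set xs \<subseteq> X \<longrightarrow> w \<in> VP P xs)
   \<comment> \<open>C6\<close>
   \<and> (\<forall>s P xs. s \<in> W \<longrightarrow> length xs = ar P \<longrightarrow>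
         (s \<in> VP P (map Nx xs) \<longleftrightarrow> g s \<in> VP P xs))
   \<comment> \<open>C7\<close>
   \<and> (\<forall>X s w. fne X \<longrightarrow> s \<in> W \<longrightarrow> w \<in> W \<longrightarrow>
         (s, w) \<in> E (Nx ` X) \<longrightarrow> (g s, g w) \<in> E X)
   \<comment> \<open>C8\<close>
   \<and> (\<forall>X Y s. fne X \<longrightarrow> fne Y \<longrightarrow> s \<in> W \<longrightarrow>
         depS VD (g s) X Y \<longrightarrow> depS VD s (Nx ` X) (Nx ` Y))"

fun sat :: "'w set \<Rightarrow> ('w \<Rightarrow> 'w) \<Rightarrow> ('v trm set \<Rightarrow> ('w \<times> 'w) set)
   \<Rightarrow> ('p \<Rightarrow> 'v trm list \<Rightarrow> 'w set) \<Rightarrow> ('v trm set \<Rightarrow> 'v trm \<Rightarrow> 'w set) \<Rightarrow> 'w \<Rightarrow> ('v, 'p) fm \<Rightarrow> bool" where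
  "sat W g E VP VD s (Pred P xs) = (s \<in> VP P xs)"
| "sat W g E VP VD s (Neg \<phi>) = (\<not> sat W g E VP VD s \<phi>)"
| "sat W g E VP VD s (Conj \<phi> \<psi>) = (sat W g E VP VD s \<phi> \<and> sat W g E VP VD s \<psi>)"
| "sat W g E VP VD s (Next \<phi>) = sat W g E VP VD (g s) \<phi>"
| "sat W g E VP VD s (DMod X \<phi>) = (\<forall>t\<in>W. (s, t) \<in> E X \<longrightarrow> sat W g E VP VD t \<phi>)"
| "sat W g E VP VD s (Dep X y) = (s \<in> VD X y)"

end

theory Submission
  imports Defs
begin


lemma gmD0:
  assumes "gen_model ar W g E VP VD"
  shows "W \<noteq> {}" "\<forall>s\<in>W. g s \<in> W"
   "\<forall>P xs. length xs = ar P \<longrightarrow> VP P xs \<subseteq> W"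
   "\<forall>X y. fne X \<longrightarrow> VD X y \<subseteq> W"
   "\<forall>X. fne X \<longrightarrow> equiv W (E X)"
   "\<forall>X s x. fne X \<longrightarrow> s \<in> W \<longrightarrow> x \<in> X \<longrightarrow> s \<in> VD X x"
   "\<forall>X Y Z s. fne X \<longrightarrow> fne Y \<longrightarrow> fne Z \<longrightarrow> s \<in> W \<longrightarrow>
         depS VD s X Y \<longrightarrow> depS VD s Y Z \<longrightarrow> depS VD s X Z"
   "\<forall>s x. s \<in> W \<longrightarrow> s \<in> VD (range Var) (Nx x)"
   "\<forall>X Y s w. fne X \<longrightarrow> fne Y \<longrightarrow> s \<in> W \<longrightarrow> w \<in> W \<longrightarrow> (s, w) \<in> E X \<longrightarrow>
         depS VD s X Y \<longrightarrow> depS VD w X Y \<and> (s, w) \<in> E Y"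
   "\<forall>X s w P xs. fne X \<longrightarrow> s \<in> W \<longrightarrow> w \<in> W \<longrightarrow> length xs = ar P \<longrightarrow>
         (s, w) \<in> E X \<longrightarrow> s \<in> VP P xs \<longrightarrow> set xs \<subseteq> X \<longrightarrow> w \<in> VP P xs"
   "\<forall>s P xs. s \<in> W \<longrightarrow> length xs = ar P \<longrightarrow>
         (s \<in> VP P (map Nx xs) \<longleftrightarrow> g s \<in> VP P xs)"
   "\<forall>X s w. fne X \<longrightarrow> s \<in> W \<longrightarrow> w \<in> W \<longrightarrow>
         (s, w) \<in> E (Nx ` X) \<longrightarrow> (g s, g w) \<in> E X"
   "\<forall>X Y s. fne X \<longrightarrow> fne Y \<longrightarrow> s \<in> W \<longrightarrow>
         depS VD (g s) X Y \<longrightarrow> depS VD s (Nx ` X) (Nx ` Y)"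
  apply (insert assms) apply (unfold gen_model_def) apply (elim conjE, assumption)+ done

lemmas gmD = gmD0(1) gmD0(2-)[rule_format]

lemma transfer_model:
  fixes E :: "'v trm set \<Rightarrow> ('w \<times> 'w) set" and h :: "'w \<Rightarrow> 'n"
  assumes gm: "gen_model ar W g E VP VD" and inj: "inj_on h W"
    and sE: "\<And>X. E X \<subseteq> W \<times> W" and sP: "\<And>P xs. VP P xs \<subseteq> W" and sD: "\<And>X y. VD X y \<subseteq> W"
  defines "g2 \<equiv> (\<lambda>n. h (g (inv_into W h n)))"
    and "E2 \<equiv> (\<lambda>X. map_prod h h ` E X)" and "VP2 \<equiv> (\<lambda>P xs. h ` VP P xs)" and "VD2 \<equiv> (\<lambda>X y. h ` VD X y)"
  shows "gen_model ar (h ` W) g2 E2 VP2 VD2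
     \<and> (\<forall>s\<in>W. sat (h ` W) g2 E2 VP2 VD2 (h s) \<phi> = sat W g E VP VD s \<phi>)"
proof -
  have memA: "\<And>a A. a \<in> W \<Longrightarrow> A \<subseteq> W \<Longrightarrow> (h a \<in> h ` A) = (a \<in> A)"
    using inj by (metis inj_on_image_mem_iff)
  have memP: "\<And>P xs a. a \<in> W \<Longrightarrow> (h a \<in> VP2 P xs) = (a \<in> VP P xs)"
    unfolding VP2_def by (rule memA[OF _ sP])
  have memD: "\<And>X y a. a \<in> W \<Longrightarrow> (h a \<in> VD2 X y) = (a \<in> VD X y)"
    unfolding VD2_def by (rule memA[OF _ sD])
  have memE: "\<And>X a b. a \<in> W \<Longrightarrow> b \<in> W \<Longrightarrow> ((h a, h b) \<in> E2 X) = ((a, b) \<in> E X)"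
  proof -
    fix X a b assume a: "a \<in> W" and b: "b \<in> W"
    show "((h a, h b) \<in> E2 X) = ((a, b) \<in> E X)"
    proof
      assume "(h a, h b) \<in> E2 X"
      then obtain a' b' where "(a',b') \<in> E X" "h a = h a'" "h b = h b'" unfolding E2_def by auto
      moreover have "a' \<in> W" "b' \<in> W" using sE calculation(1) by auto
      ultimately show "(a, b) \<in> E X" using inj a b by (metis inj_onD)
    qed (auto simp: E2_def)
  qed
  have g2h: "\<And>a. a \<in> W \<Longrightarrow> g2 (h a) = h (g a)" unfolding g2_def using inj by simp
  have depS2: "\<And>a X Y. a \<in> W \<Longrightarrow> depS VD2 (h a) X Y = depS VD a X Y"
    unfolding depS_def by (simp add: memD)
  have E2sub: "\<And>X. E2 X \<subseteq> h ` W \<times> h ` W" unfolding E2_def using sE by fastforce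
  have gmW: "W \<noteq> {}" "\<forall>s\<in>W. g s \<in> W" using gmD(1,2)[OF gm] by auto
  have part1: "gen_model ar (h ` W) g2 E2 VP2 VD2"
    unfolding gen_model_def
  proof (intro conjI)
    show "h ` W \<noteq> {}" using gmW by simp
    show "\<forall>s\<in>h ` W. g2 s \<in> h ` W" using gmW g2h by auto
    show "\<forall>P xs. length xs = ar P \<longrightarrow> VP2 P xs \<subseteq> h ` W" unfolding VP2_def using sP by blast
    show "\<forall>X y. fne X \<longrightarrow> VD2 X y \<subseteq> h ` W" unfolding VD2_def using sD by blast
    show "\<forall>X. fne X \<longrightarrow> equiv (h ` W) (E2 X)"
    proof (intro allI impI equivI)
      fix X :: "'v trm set" assume X: "fne X"
      have eq: "equiv W (E X)" using gmD(5)[OF gm X] .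
      show "E2 X \<subseteq> h ` W \<times> h ` W" by (rule E2sub)
      show "refl_on (h ` W) (E2 X)" unfolding refl_on_def
      proof
        fix x assume "x \<in> h ` W"
        then obtain a where a: "a \<in> W" "x = h a" by blast
        have "(a, a) \<in> E X" using eq a(1) unfolding equiv_def refl_on_def by blast
        then show "(x, x) \<in> E2 X" using memE a by simp
      qed
      show "sym (E2 X)" unfolding sym_def
      proof (intro allI impI)
        fix x y assume xy: "(x, y) \<in> E2 X"
        then obtain a b where "a \<in> W" "b \<in> W" "x = h a" "y = h b" using E2sub by blast
        then show "(y, x) \<in> E2 X" using xy memE eq unfolding equiv_def sym_def by simp
      qed
      show "trans (E2 X)" unfolding trans_def
      proof (intro allI impI)
        fix x y z assume xy: "(x, y) \<in> E2 X" and yz: "(y, z) \<in> E2 X"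
        then obtain a b c where "a \<in> W" "b \<in> W" "c \<in> W" "x = h a" "y = h b" "z = h c" using E2sub by blast
        note abc = this
        then have "(a, b) \<in> E X" "(b, c) \<in> E X" using xy yz memE by auto
        then have "(a, c) \<in> E X" using eq unfolding equiv_def trans_def by blast
        then show "(x, z) \<in> E2 X" using abc memE by simp
      qed
    qed
    show "\<forall>X s x. fne X \<longrightarrow> s \<in> h ` W \<longrightarrow> x \<in> X \<longrightarrow> s \<in> VD2 X x"
    proof (intro allI impI)
      fix X :: "'v trm set" and s x assume a: "fne X" "s \<in> h ` W" "x \<in> X"
      then obtain b where "b \<in> W" "s = h b" by blast
      then show "s \<in> VD2 X x" using gmD(6)[OF gm a(1) _ a(3)] memD by simp
    qed
    show "\<forall>X Y Z s. fne X \<longrightarrow> fne Y \<longrightarrow> fne Z \<longrightarrow> s \<in> h ` W \<longrightarrow>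
         depS VD2 s X Y \<longrightarrow> depS VD2 s Y Z \<longrightarrow> depS VD2 s X Z"
    proof (intro allI impI)
      fix X Y Z :: "'v trm set" and s assume a: "fne X" "fne Y" "fne Z" "s \<in> h ` W"
        "depS VD2 s X Y" "depS VD2 s Y Z"
      then obtain b where b: "b \<in> W" "s = h b" by blast
      show "depS VD2 s X Z" using a gmD(7)[OF gm a(1-3) b(1)] by (simp add: b depS2)
    qed
    show "\<forall>s x. s \<in> h ` W \<longrightarrow> s \<in> VD2 (range Var) (Nx x)"
    proof (intro allI impI)
      fix s and x :: "'v trm" assume a: "s \<in> h ` W"
      then obtain b where b: "b \<in> W" "s = h b" by blast
      show "s \<in> VD2 (range Var) (Nx x)" using gmD(8)[OF gm b(1)] by (simp add: b memD)
    qed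
    show "\<forall>X Y s w. fne X \<longrightarrow> fne Y \<longrightarrow> s \<in> h ` W \<longrightarrow> w \<in> h ` W \<longrightarrow> (s, w) \<in> E2 X \<longrightarrow>
         depS VD2 s X Y \<longrightarrow> depS VD2 w X Y \<and> (s, w) \<in> E2 Y"
    proof (intro allI impI)
      fix X Y :: "'v trm set" and s w assume a: "fne X" "fne Y" "s \<in> h ` W" "w \<in> h ` W"
        "(s, w) \<in> E2 X" "depS VD2 s X Y"
      then obtain b c where b: "b \<in> W" "s = h b" "c \<in> W" "w = h c" by blast
      show "depS VD2 w X Y \<and> (s, w) \<in> E2 Y" using a gmD(9)[OF gm a(1,2) b(1,3)]
        by (simp add: b depS2 memE)
    qed
    show "\<forall>X s w P xs. fne X \<longrightarrow> s \<in> h ` W \<longrightarrow> w \<in> h ` W \<longrightarrow> length xs = ar P \<longrightarrow>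
         (s, w) \<in> E2 X \<longrightarrow> s \<in> VP2 P xs \<longrightarrow> set xs \<subseteq> X \<longrightarrow> w \<in> VP2 P xs"
    proof (intro allI impI)
      fix X :: "'v trm set" and s w P xs assume a: "fne X" "s \<in> h ` W" "w \<in> h ` W" "length xs = ar P"
        "(s, w) \<in> E2 X" "s \<in> VP2 P xs" "set xs \<subseteq> X"
      then obtain b c where b: "b \<in> W" "s = h b" "c \<in> W" "w = h c" by blast
      show "w \<in> VP2 P xs" using a gmD(10)[OF gm a(1) b(1,3) a(4)]
        by (simp add: b memP memE)
    qed
    show "\<forall>s P xs. s \<in> h ` W \<longrightarrow> length xs = ar P \<longrightarrow>
         (s \<in> VP2 P (map Nx xs) \<longleftrightarrow> g2 s \<in> VP2 P xs)"
    proof (intro allI impI)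
      fix s P and xs :: "'v trm list" assume a: "s \<in> h ` W" "length xs = ar P"
      then obtain b where b: "b \<in> W" "s = h b" by blast
      show "(s \<in> VP2 P (map Nx xs) \<longleftrightarrow> g2 s \<in> VP2 P xs)" using gmD(11)[OF gm b(1) a(2)] gmD(2)[OF gm b(1)]
        by (simp add: b memP g2h)
    qed
    show "\<forall>X s w. fne X \<longrightarrow> s \<in> h ` W \<longrightarrow> w \<in> h ` W \<longrightarrow>
         (s, w) \<in> E2 (Nx ` X) \<longrightarrow> (g2 s, g2 w) \<in> E2 X"
    proof (intro allI impI)
      fix X :: "'v trm set" and s w assume a: "fne X" "s \<in> h ` W" "w \<in> h ` W" "(s, w) \<in> E2 (Nx ` X)"
      then obtain b c where b: "b \<in> W" "s = h b" "c \<in> W" "w = h c" by blast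
      show "(g2 s, g2 w) \<in> E2 X" using a gmD(12)[OF gm a(1) b(1,3)] gmD(2)[OF gm b(1)] gmD(2)[OF gm b(3)]
        by (simp add: b memE g2h)
    qed
    show "\<forall>X Y s. fne X \<longrightarrow> fne Y \<longrightarrow> s \<in> h ` W \<longrightarrow>
         depS VD2 (g2 s) X Y \<longrightarrow> depS VD2 s (Nx ` X) (Nx ` Y)"
    proof (intro allI impI)
      fix X Y :: "'v trm set" and s assume a: "fne X" "fne Y" "s \<in> h ` W" "depS VD2 (g2 s) X Y"
      then obtain b where b: "b \<in> W" "s = h b" by blast
      show "depS VD2 s (Nx ` X) (Nx ` Y)" using a gmD(13)[OF gm a(1,2) b(1)] gmD(2)[OF gm b(1)]
        by (simp add: b depS2 g2h)
    qed
  qed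
  have "\<forall>s\<in>W. sat (h ` W) g2 E2 VP2 VD2 (h s) \<phi> = sat W g E VP VD s \<phi>"
  proof (induction \<phi>)
    case (DMod X \<phi>)
    then show ?case using memE sE by auto
  qed (use memP memD g2h gmW in auto)
  with part1 show ?thesis by blast
qed


fun dep :: "'v trm \<Rightarrow> nat" where
  "dep (Var v) = 0" | "dep (Nx t) = Suc (dep t)"

fun cap :: "nat \<Rightarrow> 'v trm \<Rightarrow> 'v trm" where
  "cap k (Var v) = Var v"
| "cap 0 (Nx t) = cap 0 t"
| "cap (Suc k) (Nx t) = Nx (cap k t)"

lemma cap_id: "dep t \<le> k \<Longrightarrow> cap k t = t"
proof (induction t arbitrary: k)
  case (Var x) then show ?case by simp
next
  case (Nx t) then show ?case by (cases k) auto
qed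

lemma dep_cap: "dep (cap k t) \<le> k"
proof (induction t arbitrary: k)
  case (Var x) then show ?case by simp
next
  case (Nx t) then show ?case by (cases k) auto
qed

lemma cap0_Nx: "cap 0 (Nx t) = cap 0 t" by simp

definition T :: "nat \<Rightarrow> 'v trm set" where "T k = {t. dep t \<le> k}"

lemma T_Suc: "T (Suc k) \<subseteq> range Var \<union> Nx ` T k"
proof
  fix t :: "'v trm" assume "t \<in> T (Suc k)"
  then show "t \<in> range Var \<union> Nx ` T k" by (cases t) (auto simp: T_def)
qed

lemma finite_T: "finite (T k :: ('v::finite) trm set)"
proof (induction k)
  case 0
  have "T 0 \<subseteq> (range Var :: 'v trm set)"
  proof fix t :: "'v trm" assume "t \<in> T 0" then show "t \<in> range Var" by (cases t) (auto simp: T_def) qed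
  then show ?case by (rule finite_subset) simp
next
  case (Suc k)
  then show ?case using T_Suc[of k] by (meson finite_Un finite_imageI finite finite_subset)
qed

lemma cap_T: "cap k t \<in> T k" using dep_cap by (simp add: T_def)

lemma fne_cap: "fne X \<Longrightarrow> fne (cap k ` X)" by (simp add: fne_def)

lemma cap_Nx_img: "cap (Suc k) ` Nx ` X = Nx ` cap k ` X" by (auto simp: image_image)
lemma cap0_Nx_img: "cap 0 ` Nx ` X = cap 0 ` X" by (auto simp: image_image)

fun subs :: "('v, 'p) fm \<Rightarrow> ('v, 'p) fm set" where
  "subs (Pred P xs) = {Pred P xs}"
| "subs (Neg \<phi>) = insert (Neg \<phi>) (subs \<phi>)"
| "subs (Conj \<phi> \<psi>) = insert (Conj \<phi> \<psi>) (subs \<phi> \<union> subs \<psi>)"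
| "subs (Next \<phi>) = insert (Next \<phi>) (subs \<phi>)"
| "subs (DMod X \<phi>) = insert (DMod X \<phi>) (subs \<phi>)"
| "subs (Dep X y) = {Dep X y}"

lemma finite_subs: "finite (subs \<phi>)" by (induction \<phi>) auto
lemma self_subs: "\<phi> \<in> subs \<phi>" by (cases \<phi>) auto

fun ok :: "nat \<Rightarrow> ('v, 'p) fm \<Rightarrow> bool" where
  "ok k (Pred P xs) = (\<forall>t\<in>set xs. dep t \<le> k)"
| "ok k (Neg \<phi>) = ok k \<phi>"
| "ok k (Conj \<phi> \<psi>) = (ok k \<phi> \<and> ok k \<psi>)"
| "ok k (Next \<phi>) = (k > 0 \<and> ok (k - 1) \<phi>)"
| "ok k (DMod X \<phi>) = ((\<forall>t\<in>X. dep t \<le> k) \<and> ok k \<phi>)"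
| "ok k (Dep X y) = ((\<forall>t\<in>X. dep t \<le> k) \<and> dep y \<le> k)"

lemma ok_mono: "ok k \<phi> \<Longrightarrow> k \<le> k' \<Longrightarrow> ok k' \<phi>"
proof (induction \<phi> arbitrary: k k')
  case (Next \<phi>) then show ?case by fastforce
qed force+

lemma ok_ex: "wf_fm ar \<phi> \<Longrightarrow> \<exists>k. ok k \<phi>"
proof (induction \<phi>)
  case (Pred P xs)
  have "ok (sum_list (map dep xs)) (Pred P xs)"
    by (simp add: member_le_sum_list)
  then show ?case by blast
next
  case (Neg \<phi>) then show ?case by simp
next
  case (Conj \<phi> \<psi>)
  then obtain a b where "ok a \<phi>" "ok b \<psi>" by auto
  then have "ok (a + b) (Conj \<phi> \<psi>)" using ok_mono[of a \<phi> "a+b"] ok_mono[of b \<psi> "a+b"] by simp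
  then show ?case by blast
next
  case (Next \<phi>)
  then obtain a where "ok a \<phi>" by auto
  then have "ok (Suc a) (Next \<phi>)" by simp
  then show ?case by blast
next
  case (DMod X \<phi>)
  then obtain a where a: "ok a \<phi>" and X: "finite X" by (auto simp: fne_def)
  obtain b where b: "\<forall>t\<in>X. dep t \<le> b" using X finite_nat_set_iff_bounded_le[of "dep ` X"] by auto
  have "ok (a + b) (DMod X \<phi>)" using ok_mono[OF a] b by fastforce
  then show ?case by blast
next
  case (Dep X y)
  then have X: "finite X" by (auto simp: fne_def)
  obtain b where b: "\<forall>t\<in>X. dep t \<le> b" using X finite_nat_set_iff_bounded_le[of "dep ` X"] by auto
  have "ok (b + dep y) (Dep X y)" using b by fastforce
  then show ?case by blast
qed


lemma cap_Var_img: "cap k ` range Var = range Var"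
  by (auto simp: image_iff)

lemma cap0_Var: "cap 0 t \<in> range Var"
  by (induction t) auto

locale fmp =
  fixes ar :: "'p::finite \<Rightarrow> nat" and W :: "'w set" and g :: "'w \<Rightarrow> 'w"
    and E :: "'v::finite trm set \<Rightarrow> ('w \<times> 'w) set" and VP :: "'p \<Rightarrow> 'v trm list \<Rightarrow> 'w set"
    and VD :: "'v trm set \<Rightarrow> 'v trm \<Rightarrow> 'w set"
    and \<phi> :: "('v, 'p) fm" and N :: nat
  assumes gm: "gen_model ar W g E VP VD"
begin

abbreviation S where "S w \<psi> \<equiv> sat W g E VP VD w \<psi>"

definition B :: "nat \<Rightarrow> ('v, 'p) fm set" where
  "B k = {Pred P xs |P xs. set xs \<subseteq> T k \<and> length xs = ar P} \<union> {Dep Z y |Z y. Z \<subseteq> T k \<and> y \<in> T k} \<union> subs \<phi>"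

fun Cl :: "nat \<Rightarrow> ('v, 'p) fm set" where
  "Cl 0 = B 0" | "Cl (Suc k) = B (Suc k) \<union> Next ` Cl k"

lemma B_Cl: "B k \<subseteq> Cl k" by (cases k) auto
lemma Cl_Pred: "set xs \<subseteq> T k \<Longrightarrow> length xs = ar P \<Longrightarrow> Pred P xs \<in> Cl k"
  using B_Cl unfolding B_def by blast
lemma Cl_Dep: "Z \<subseteq> T k \<Longrightarrow> y \<in> T k \<Longrightarrow> Dep Z y \<in> Cl k"
  using B_Cl unfolding B_def by blast
lemma Cl_subs: "\<psi> \<in> subs \<phi> \<Longrightarrow> \<psi> \<in> Cl k"
  using B_Cl unfolding B_def by blast
lemma Cl_Next: "\<chi> \<in> Cl k \<Longrightarrow> Next \<chi> \<in> Cl (Suc k)" by simp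

lemma finite_B: "finite (B k)"
proof -
  have "({Pred P xs |P xs. set xs \<subseteq> (T k :: 'v trm set) \<and> length xs = ar P} :: ('v,'p) fm set) \<subseteq>
        (\<Union>P. Pred P ` {xs. set xs \<subseteq> T k \<and> length xs = ar P})" by blast
  moreover have "finite ((\<Union>P. Pred P ` {xs. set xs \<subseteq> T k \<and> length xs = ar P}) :: ('v,'p) fm set)"
    using finite_T[of k] by (intro finite_UN_I[OF finite] finite_imageI finite_lists_length_eq)
  ultimately have 1: "finite ({Pred P xs |P xs. set xs \<subseteq> (T k :: 'v trm set) \<and> length xs = ar P} :: ('v,'p) fm set)"
    by (rule finite_subset)
  have "({Dep Z y |Z y. Z \<subseteq> T k \<and> (y :: 'v trm) \<in> T k} :: ('v,'p) fm set) \<subseteq> (\<lambda>(Z, y). Dep Z y) ` (Pow (T k) \<times> T k)" by auto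
  then have 2: "finite ({Dep Z y |Z y. Z \<subseteq> T k \<and> (y :: 'v trm) \<in> T k} :: ('v,'p) fm set)"
    using finite_T by (meson finite_Pow_iff finite_SigmaI finite_imageI finite_subset)
  show ?thesis unfolding B_def using 1 2 finite_subs by blast
qed

lemma finite_Cl: "finite (Cl k)"
  by (induction k) (auto simp: finite_B)

definition Lam :: "nat \<Rightarrow> 'w \<Rightarrow> ('v, 'p) fm set" where
  "Lam k w = {\<chi> \<in> Cl k. S w \<chi>}"

lemma Lam_iff: "\<chi> \<in> Cl k \<Longrightarrow> \<chi> \<in> Lam k w \<longleftrightarrow> S w \<chi>" by (simp add: Lam_def)

definition Inv :: "'v trm set \<Rightarrow> ('v, 'p) fm set" where
  "Inv Y = {\<chi>. \<forall>u\<in>W. \<forall>u'\<in>W. (u, u') \<in> E Y \<longrightarrow> (S u \<chi> \<longleftrightarrow> S u' \<chi>)}"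

definition agree :: "nat \<Rightarrow> 'v trm set \<Rightarrow> 'w \<Rightarrow> 'w \<Rightarrow> bool" where
  "agree k X w w' \<longleftrightarrow> (\<forall>Y. Y \<noteq> {} \<longrightarrow> Y \<subseteq> T k \<longrightarrow> depS VD w (cap k ` X) Y \<longrightarrow>
      Lam k w \<inter> Inv Y = Lam k w' \<inter> Inv Y)"

definition W' :: "(nat \<times> ('v, 'p) fm set) set" where
  "W' = {(k, Lam k w) | k w. k \<le> N \<and> w \<in> W}"

definition g' :: "nat \<times> ('v, 'p) fm set \<Rightarrow> nat \<times> ('v, 'p) fm set" where
  "g' q = (if fst q = 0 then q else (fst q - 1, {\<chi> \<in> Cl (fst q - 1). Next \<chi> \<in> snd q}))"

definition Dset :: "nat \<Rightarrow> 'v trm set \<Rightarrow> ('v, 'p) fm set \<Rightarrow> 'v trm set" where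
  "Dset k X L = {y \<in> T k. Dep (cap k ` X) y \<in> L}"

definition E' :: "'v trm set \<Rightarrow> ((nat \<times> ('v, 'p) fm set) \<times> (nat \<times> ('v, 'p) fm set)) set" where
  "E' X = {(p, q). p \<in> W' \<and> q \<in> W' \<and> fst p = fst q \<and>
     (\<forall>Y. Y \<noteq> {} \<longrightarrow> Y \<subseteq> Dset (fst p) X (snd p) \<longrightarrow> snd p \<inter> Inv Y = snd q \<inter> Inv Y)}"

definition VP' :: "'p \<Rightarrow> 'v trm list \<Rightarrow> (nat \<times> ('v, 'p) fm set) set" where
  "VP' P xs = {q \<in> W'. Pred P (map (cap (fst q)) xs) \<in> snd q}"

definition VD' :: "'v trm set \<Rightarrow> 'v trm \<Rightarrow> (nat \<times> ('v, 'p) fm set) set" where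
  "VD' X y = {q \<in> W'. Dep (cap (fst q) ` X) (cap (fst q) y) \<in> snd q}"

lemma W'_cases: "q \<in> W' \<Longrightarrow> \<exists>k w. q = (k, Lam k w) \<and> k \<le> N \<and> w \<in> W"
  unfolding W'_def by blast

lemma W'_mem: "w \<in> W \<Longrightarrow> (k, Lam k w) \<in> W' \<longleftrightarrow> k \<le> N"
  unfolding W'_def by blast

lemma capT_img: "cap k ` X \<subseteq> T k" using cap_T by blast

lemma Dset_Lam: "Y \<subseteq> T k \<Longrightarrow> (Y \<subseteq> Dset k X (Lam k w)) \<longleftrightarrow> depS VD w (cap k ` X) Y"
  unfolding Dset_def depS_def using Lam_iff[OF Cl_Dep[OF capT_img]] by auto

lemma Dset_Lam2: "(Y \<subseteq> Dset k X (Lam k w)) \<longleftrightarrow> (Y \<subseteq> T k \<and> depS VD w (cap k ` X) Y)"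
proof
  assume a: "Y \<subseteq> Dset k X (Lam k w)"
  then have "Y \<subseteq> T k" unfolding Dset_def by blast
  then show "Y \<subseteq> T k \<and> depS VD w (cap k ` X) Y" using a Dset_Lam by blast
next
  assume "Y \<subseteq> T k \<and> depS VD w (cap k ` X) Y"
  then show "Y \<subseteq> Dset k X (Lam k w)" using Dset_Lam by blast
qed

lemma E'_iff: "w \<in> W \<Longrightarrow> w' \<in> W \<Longrightarrow>
   ((k, Lam k w), (k', Lam k' w')) \<in> E' X \<longleftrightarrow> k \<le> N \<and> k' = k \<and> agree k X w w'"
proof -
  assume w: "w \<in> W" and w': "w' \<in> W"
  have "(\<forall>Y. Y \<noteq> {} \<longrightarrow> Y \<subseteq> Dset k X (Lam k w) \<longrightarrow> Lam k w \<inter> Inv Y = Lam k w' \<inter> Inv Y)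
     \<longleftrightarrow> agree k X w w'"
    by (simp only: agree_def Dset_Lam2 imp_conjL)
  then show ?thesis unfolding E'_def using W'_mem[OF w] W'_mem[OF w'] by auto
qed

lemma g'_Suc: "w \<in> W \<Longrightarrow> g' (Suc j, Lam (Suc j) w) = (j, Lam j (g w))"
  unfolding g'_def Lam_def by auto

lemma g'_0: "g' (0, L) = (0, L)" unfolding g'_def by simp

lemma VD'_Lam: "w \<in> W \<Longrightarrow> k \<le> N \<Longrightarrow>
   (k, Lam k w) \<in> VD' X y \<longleftrightarrow> w \<in> VD (cap k ` X) (cap k y)"
  unfolding VD'_def using W'_mem Lam_iff[OF Cl_Dep[OF capT_img cap_T]] by auto

lemma depS'_Lam: "w \<in> W \<Longrightarrow> k \<le> N \<Longrightarrow>
   depS VD' (k, Lam k w) X Y \<longleftrightarrow> depS VD w (cap k ` X) (cap k ` Y)"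
  unfolding depS_def using VD'_Lam by auto

lemma VP'_Lam: "w \<in> W \<Longrightarrow> k \<le> N \<Longrightarrow> length xs = ar P \<Longrightarrow>
   (k, Lam k w) \<in> VP' P xs \<longleftrightarrow> w \<in> VP P (map (cap k) xs)"
proof -
  assume a: "w \<in> W" "k \<le> N" "length xs = ar P"
  have "set (map (cap k) xs) \<subseteq> T k" using cap_T by auto
  then show ?thesis unfolding VP'_def using W'_mem[OF a(1)] a Lam_iff[OF Cl_Pred] by auto
qed

lemma Esym: "fne Z \<Longrightarrow> (u, u') \<in> E Z \<Longrightarrow> (u', u) \<in> E Z"
  using gmD(5)[OF gm] unfolding equiv_def sym_def by blast
lemma Etrans: "fne Z \<Longrightarrow> (u, u') \<in> E Z \<Longrightarrow> (u', u'') \<in> E Z \<Longrightarrow> (u, u'') \<in> E Z"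
  using gmD(5)[OF gm] unfolding equiv_def trans_def by blast
lemma Erefl: "fne Z \<Longrightarrow> u \<in> W \<Longrightarrow> (u, u) \<in> E Z"
  using gmD(5)[OF gm] unfolding equiv_def refl_on_def by blast
lemma Esub: "fne Z \<Longrightarrow> (u, u') \<in> E Z \<Longrightarrow> u \<in> W \<and> u' \<in> W"
  using gmD(5)[OF gm] unfolding equiv_def by blast

lemma fne_single: "fne {y}" by (simp add: fne_def)

lemma InvD: "\<chi> \<in> Inv Y \<Longrightarrow> u \<in> W \<Longrightarrow> u' \<in> W \<Longrightarrow> (u, u') \<in> E Y \<Longrightarrow> S u \<chi> = S u' \<chi>"
  unfolding Inv_def by simp

lemma Lam_Inv_eq:
  assumes u: "u \<in> W" and u': "u' \<in> W" and e: "(u, u') \<in> E Y"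
  shows "Lam k u \<inter> Inv Y = Lam k u' \<inter> Inv Y"
proof (rule set_eqI)
  fix \<chi>
  show "\<chi> \<in> Lam k u \<inter> Inv Y \<longleftrightarrow> \<chi> \<in> Lam k u' \<inter> Inv Y"
  proof
    assume a: "\<chi> \<in> Lam k u \<inter> Inv Y"
    then have i: "\<chi> \<in> Inv Y" and c: "\<chi> \<in> Cl k" and s: "S u \<chi>" unfolding Lam_def by auto
    have "S u' \<chi>" using InvD[OF i u u' e, THEN iffD1, OF s] .
    then show "\<chi> \<in> Lam k u' \<inter> Inv Y" using i c unfolding Lam_def by auto
  next
    assume a: "\<chi> \<in> Lam k u' \<inter> Inv Y"
    then have i: "\<chi> \<in> Inv Y" and c: "\<chi> \<in> Cl k" and s: "S u' \<chi>" unfolding Lam_def by auto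
    have "S u \<chi>" using InvD[OF i u u' e, THEN iffD2, OF s] .
    then show "\<chi> \<in> Lam k u \<inter> Inv Y" using i c unfolding Lam_def by auto
  qed
qed

lemma InvI:
  assumes Y: "fne Y" and h: "\<And>u u'. u \<in> W \<Longrightarrow> u' \<in> W \<Longrightarrow> (u, u') \<in> E Y \<Longrightarrow> S u \<chi> \<Longrightarrow> S u' \<chi>"
  shows "\<chi> \<in> Inv Y"
  unfolding Inv_def
proof (intro CollectI ballI impI)
  fix u u' assume u: "u \<in> W" "u' \<in> W" and e: "(u, u') \<in> E Y"
  have e': "(u', u) \<in> E Y" using Esym[OF Y e] .
  show "S u \<chi> = S u' \<chi>"
  proof
    assume "S u \<chi>" then show "S u' \<chi>" using h[OF u e] by blast
  next
    assume "S u' \<chi>" then show "S u \<chi>" using h[OF u(2) u(1) e'] by blast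
  qed
qed

lemma Inv_Dep: "fne Z \<Longrightarrow> Dep Z y \<in> Inv Z"
proof (rule InvI)
  fix u u' assume Z: "fne Z" and u: "u \<in> W" "u' \<in> W" and e: "(u, u') \<in> E Z" and s: "S u (Dep Z y)"
  have "depS VD u Z {y}" using s by (simp add: depS_def)
  then have "depS VD u' Z {y}" using gmD(9)[OF gm Z fne_single u e] by blast
  then show "S u' (Dep Z y)" by (simp add: depS_def)
qed

lemma Inv_Pred: "fne Z \<Longrightarrow> set xs \<subseteq> Z \<Longrightarrow> length xs = ar P \<Longrightarrow> Pred P xs \<in> Inv Z"
proof (rule InvI)
  fix u u' assume Z: "fne Z" and xs: "set xs \<subseteq> Z" "length xs = ar P"
    and u: "u \<in> W" "u' \<in> W" and e: "(u, u') \<in> E Z" and s: "S u (Pred P xs)"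
  have "u \<in> VP P xs" using s by simp
  then have "u' \<in> VP P xs" using gmD(10)[OF gm Z u xs(2) e _ xs(1)] by blast
  then show "S u' (Pred P xs)" by simp
qed

lemma Inv_Next: "fne Z \<Longrightarrow> \<chi> \<in> Inv Z \<Longrightarrow> Next \<chi> \<in> Inv (Nx ` Z)"
proof (rule InvI)
  assume Z: "fne Z" and i: "\<chi> \<in> Inv Z"
  show "fne (Nx ` Z)" using Z by (simp add: fne_def)
  fix u u' assume u: "u \<in> W" "u' \<in> W" and e: "(u, u') \<in> E (Nx ` Z)" and s: "S u (Next \<chi>)"
  have e2: "(g u, g u') \<in> E Z" using gmD(12)[OF gm Z u e] .
  have gu: "g u \<in> W" "g u' \<in> W" using gmD(2)[OF gm] u by auto
  have "S (g u) \<chi>" using s by simp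
  then have "S (g u') \<chi>" using InvD[OF i gu e2] by simp
  then show "S u' (Next \<chi>)" by simp
qed

lemma Inv_DMod: "fne Z \<Longrightarrow> DMod Z \<psi> \<in> Inv Z"
proof (rule InvI)
  fix u u' assume Z: "fne Z" and u: "u \<in> W" "u' \<in> W" and e: "(u, u') \<in> E Z" and s: "S u (DMod Z \<psi>)"
  have s': "\<forall>t\<in>W. (u, t) \<in> E Z \<longrightarrow> S t \<psi>" using s by (simp only: sat.simps)
  have "\<forall>t\<in>W. (u', t) \<in> E Z \<longrightarrow> S t \<psi>"
  proof (intro ballI impI)
    fix t assume t: "t \<in> W" "(u', t) \<in> E Z"
    have "(u, t) \<in> E Z" using Etrans[OF Z e t(2)] .
    then show "S t \<psi>" using s' t(1) by blast
  qed
  then show "S u' (DMod Z \<psi>)" by (simp only: sat.simps)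
qed

lemma fneT: "Y \<noteq> {} \<Longrightarrow> Y \<subseteq> (T k :: 'v trm set) \<Longrightarrow> fne Y"
proof -
  assume a: "Y \<noteq> {}" "Y \<subseteq> T k"
  have "finite Y" using finite_subset[OF a(2) finite_T] .
  then show ?thesis using a(1) by (simp add: fne_def)
qed

lemma agree_dep: "fne X \<Longrightarrow> w \<in> W \<Longrightarrow> agree k X w w' \<Longrightarrow> y \<in> T k \<Longrightarrow>
   (w \<in> VD (cap k ` X) y \<longleftrightarrow> w' \<in> VD (cap k ` X) y)"
proof -
  assume X: "fne X" and w: "w \<in> W" and ag: "agree k X w w'" and y: "y \<in> T k"
  have fX: "fne (cap k ` X)" using fne_cap[OF X] .
  have "depS VD w (cap k ` X) (cap k ` X)" unfolding depS_def using gmD(6)[OF gm fX w] by blast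
  moreover have "cap k ` X \<noteq> {}" using fX by (simp add: fne_def)
  ultimately have eq: "Lam k w \<inter> Inv (cap k ` X) = Lam k w' \<inter> Inv (cap k ` X)"
    using ag[unfolded agree_def, rule_format, OF _ capT_img] by simp
  have c: "Dep (cap k ` X) y \<in> Cl k" using Cl_Dep[OF capT_img y] .
  have i: "Dep (cap k ` X) y \<in> Inv (cap k ` X)" using Inv_Dep[OF fX] .
  have "Dep (cap k ` X) y \<in> Lam k w \<longleftrightarrow> Dep (cap k ` X) y \<in> Lam k w'" using eq i by blast
  then show ?thesis using Lam_iff[OF c] by simp
qed

lemma agree_depS: "fne X \<Longrightarrow> w \<in> W \<Longrightarrow> agree k X w w' \<Longrightarrow> Y \<subseteq> T k \<Longrightarrow>
   (depS VD w (cap k ` X) Y \<longleftrightarrow> depS VD w' (cap k ` X) Y)"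
  unfolding depS_def
proof (rule ball_cong[OF refl])
  fix y assume X: "fne X" and w: "w \<in> W" and ag: "agree k X w w'" and Y: "Y \<subseteq> T k" and y: "y \<in> Y"
  have "y \<in> T k" using Y y by blast
  then show "(w \<in> VD (cap k ` X) y) = (w' \<in> VD (cap k ` X) y)" by (rule agree_dep[OF X w ag])
qed

lemma agree_refl: "agree k X w w" unfolding agree_def by blast

lemma agree_sym: "fne X \<Longrightarrow> w \<in> W \<Longrightarrow> agree k X w w' \<Longrightarrow> agree k X w' w"
proof -
  assume X: "fne X" and w: "w \<in> W" and a: "agree k X w w'"
  show ?thesis unfolding agree_def
  proof (intro allI impI)
    fix Y assume Y: "Y \<noteq> {}" "Y \<subseteq> T k" "depS VD w' (cap k ` X) Y"
    then have "depS VD w (cap k ` X) Y" using agree_depS[OF X w a Y(2)] by simp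
    then have "Lam k w \<inter> Inv Y = Lam k w' \<inter> Inv Y" using a[unfolded agree_def, rule_format, OF Y(1,2)] by simp
    then show "Lam k w' \<inter> Inv Y = Lam k w \<inter> Inv Y" by simp
  qed
qed

lemma agree_trans: "fne X \<Longrightarrow> w \<in> W \<Longrightarrow> w' \<in> W \<Longrightarrow> agree k X w w' \<Longrightarrow> agree k X w' w'' \<Longrightarrow> agree k X w w''"
proof -
  assume X: "fne X" and w: "w \<in> W" "w' \<in> W" and a1: "agree k X w w'" and a2: "agree k X w' w''"
  show ?thesis unfolding agree_def
  proof (intro allI impI)
    fix Y assume Y: "Y \<noteq> {}" "Y \<subseteq> T k" "depS VD w (cap k ` X) Y"
    then have "depS VD w' (cap k ` X) Y" using agree_depS[OF X w(1) a1 Y(2)] by simp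
    then have "Lam k w' \<inter> Inv Y = Lam k w'' \<inter> Inv Y" using a2[unfolded agree_def, rule_format, OF Y(1,2)] by simp
    moreover have "Lam k w \<inter> Inv Y = Lam k w' \<inter> Inv Y" using a1[unfolded agree_def, rule_format, OF Y(1,2,3)] .
    ultimately show "Lam k w \<inter> Inv Y = Lam k w'' \<inter> Inv Y" by simp
  qed
qed


lemma Lam_sub: "Lam k w \<subseteq> Cl k" unfolding Lam_def by blast

lemma finite_W': "finite W'"
proof -
  have "W' \<subseteq> (\<Union>k\<le>N. {k} \<times> Pow (Cl k))" unfolding W'_def using Lam_sub by blast
  moreover have "finite (\<Union>k\<le>N. {k} \<times> Pow (Cl k))" using finite_Cl by blast
  ultimately show ?thesis by (rule finite_subset)
qed

lemma new_equiv: "fne X \<Longrightarrow> equiv W' (E' X)"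
proof (rule equivI)
  assume X: "fne X"
  show "E' X \<subseteq> W' \<times> W'" unfolding E'_def by blast
  show "refl_on W' (E' X)" unfolding refl_on_def
  proof
    fix q assume "q \<in> W'"
    then obtain k w where q: "q = (k, Lam k w)" "k \<le> N" "w \<in> W" using W'_cases by blast
    show "(q, q) \<in> E' X" using q E'_iff agree_refl by simp
  qed
  show "sym (E' X)" unfolding sym_def
  proof (intro allI impI)
    fix p q assume pq: "(p, q) \<in> E' X"
    then have "p \<in> W'" "q \<in> W'" unfolding E'_def by auto
    note W2 = this
    obtain k w where p: "p = (k, Lam k w)" "w \<in> W" using W'_cases[OF W2(1)] by blast
    obtain k' w' where q: "q = (k', Lam k' w')" "w' \<in> W" using W'_cases[OF W2(2)] by blast
    have a1: "k \<le> N" "k' = k" "agree k X w w'" using pq by (simp_all add: p q E'_iff)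
    have "agree k X w' w" using agree_sym[OF X p(2) a1(3)] .
    then show "(q, p) \<in> E' X" using a1 by (simp add: p q E'_iff)
  qed
  show "trans (E' X)" unfolding trans_def
  proof (intro allI impI)
    fix p q r assume pq: "(p, q) \<in> E' X" and qr: "(q, r) \<in> E' X"
    then have "p \<in> W'" "q \<in> W'" "r \<in> W'" unfolding E'_def by auto
    note W3 = this
    obtain k w where p: "p = (k, Lam k w)" "w \<in> W" using W'_cases[OF W3(1)] by blast
    obtain k' w' where q: "q = (k', Lam k' w')" "w' \<in> W" using W'_cases[OF W3(2)] by blast
    obtain k'' w'' where r: "r = (k'', Lam k'' w'')" "w'' \<in> W" using W'_cases[OF W3(3)] by blast
    have a1: "k \<le> N" "k' = k" "agree k X w w'" using pq by (simp_all add: p q E'_iff)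
    have a2: "k'' = k'" "agree k' X w' w''" using qr by (simp_all add: q r E'_iff)
    have "agree k X w w''" using agree_trans[OF X p(2) q(2) a1(3)] a2 a1(2) by simp
    then show "(p, r) \<in> E' X" using a1 a2 by (simp add: p r E'_iff)
  qed
qed

lemma fin_range_Var: "fne (range Var :: 'v trm set)" by (simp add: fne_def)

lemma new_C3a: "fne X \<Longrightarrow> q \<in> W' \<Longrightarrow> x \<in> X \<Longrightarrow> q \<in> VD' X x"
proof -
  assume X: "fne X" and q: "q \<in> W'" and x: "x \<in> X"
  obtain k w where qq: "q = (k, Lam k w)" "k \<le> N" "w \<in> W" using W'_cases[OF q] by blast
  show ?thesis using gmD(6)[OF gm fne_cap[OF X] qq(3)] x by (simp add: qq VD'_Lam)
qed

lemma new_C3b: "fne X \<Longrightarrow> fne Y \<Longrightarrow> fne Z \<Longrightarrow> q \<in> W' \<Longrightarrow>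
   depS VD' q X Y \<Longrightarrow> depS VD' q Y Z \<Longrightarrow> depS VD' q X Z"
proof -
  assume X: "fne X" and Y: "fne Y" and Z: "fne Z" and q: "q \<in> W'"
  obtain k w where qq: "q = (k, Lam k w)" "k \<le> N" "w \<in> W" using W'_cases[OF q] by blast
  show "depS VD' q X Y \<Longrightarrow> depS VD' q Y Z \<Longrightarrow> depS VD' q X Z"
    using gmD(7)[OF gm fne_cap[OF X] fne_cap[OF Y] fne_cap[OF Z] qq(3)] by (simp add: qq depS'_Lam)
qed

lemma new_C3c: "q \<in> W' \<Longrightarrow> q \<in> VD' (range Var) (Nx x)"
proof -
  assume q: "q \<in> W'"
  obtain k w where qq: "q = (k, Lam k w)" "k \<le> N" "w \<in> W" using W'_cases[OF q] by blast
  show ?thesis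
  proof (cases k)
    case 0
    then show ?thesis using gmD(6)[OF gm fin_range_Var qq(3) cap0_Var[of x]]
      by (simp add: qq VD'_Lam cap_Var_img)
  next
    case (Suc j)
    have "Suc j \<le> N" using qq Suc by simp
    then show ?thesis using gmD(8)[OF gm qq(3)] Suc
      by (simp add: qq VD'_Lam[OF qq(3)] cap_Var_img)
  qed
qed

lemma new_C4: "fne X \<Longrightarrow> fne Y \<Longrightarrow> p \<in> W' \<Longrightarrow> q \<in> W' \<Longrightarrow> (p, q) \<in> E' X \<Longrightarrow>
   depS VD' p X Y \<Longrightarrow> depS VD' q X Y \<and> (p, q) \<in> E' Y"
proof -
  assume X: "fne X" and Y: "fne Y" and p: "p \<in> W'" and q: "q \<in> W'" and pq: "(p, q) \<in> E' X"
    and d: "depS VD' p X Y"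
  obtain k w where pp: "p = (k, Lam k w)" "k \<le> N" "w \<in> W" using W'_cases[OF p] by blast
  obtain k' w' where qq: "q = (k', Lam k' w')" "k' \<le> N" "w' \<in> W" using W'_cases[OF q] by blast
  have kk: "k' = k" and ag: "agree k X w w'" using pq by (simp_all add: pp qq E'_iff)
  have dw: "depS VD w (cap k ` X) (cap k ` Y)" using d by (simp add: pp depS'_Lam)
  have dw': "depS VD w' (cap k ` X) (cap k ` Y)" using agree_depS[OF X pp(3) ag capT_img] dw by simp
  have "agree k Y w w'" unfolding agree_def
  proof (intro allI impI)
    fix Z assume Z: "Z \<noteq> {}" "Z \<subseteq> T k" "depS VD w (cap k ` Y) Z"
    have "depS VD w (cap k ` X) Z"
      using gmD(7)[OF gm fne_cap[OF X] fne_cap[OF Y] fneT[OF Z(1,2)] pp(3) dw Z(3)] .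
    then show "Lam k w \<inter> Inv Z = Lam k w' \<inter> Inv Z" using ag[unfolded agree_def, rule_format, OF Z(1,2)] by simp
  qed
  then show ?thesis using dw' pp qq kk by (simp add: E'_iff depS'_Lam)
qed

lemma new_C5: "fne X \<Longrightarrow> p \<in> W' \<Longrightarrow> q \<in> W' \<Longrightarrow> length xs = ar P \<Longrightarrow>
   (p, q) \<in> E' X \<Longrightarrow> p \<in> VP' P xs \<Longrightarrow> set xs \<subseteq> X \<Longrightarrow> q \<in> VP' P xs"
proof -
  assume X: "fne X" and p: "p \<in> W'" and q: "q \<in> W'" and len: "length xs = ar P"
    and pq: "(p, q) \<in> E' X" and vp: "p \<in> VP' P xs" and sx: "set xs \<subseteq> X"
  obtain k w where pp: "p = (k, Lam k w)" "k \<le> N" "w \<in> W" using W'_cases[OF p] by blast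
  obtain k' w' where qq: "q = (k', Lam k' w')" "k' \<le> N" "w' \<in> W" using W'_cases[OF q] by blast
  have kk: "k' = k" and ag: "agree k X w w'" using pq by (simp_all add: pp qq E'_iff)
  have fX: "fne (cap k ` X)" using fne_cap[OF X] .
  have "depS VD w (cap k ` X) (cap k ` X)" unfolding depS_def using gmD(6)[OF gm fX pp(3)] by blast
  moreover have "cap k ` X \<noteq> {}" using fX by (simp add: fne_def)
  ultimately have eq: "Lam k w \<inter> Inv (cap k ` X) = Lam k w' \<inter> Inv (cap k ` X)"
    using ag[unfolded agree_def, rule_format, OF _ capT_img] by simp
  have len2: "length (map (cap k) xs) = ar P" using len by simp
  have st: "set (map (cap k) xs) \<subseteq> T k" using cap_T by auto
  have c: "Pred P (map (cap k) xs) \<in> Cl k" using Cl_Pred[OF st len2] .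
  have "set (map (cap k) xs) \<subseteq> cap k ` X" using sx by auto
  then have i: "Pred P (map (cap k) xs) \<in> Inv (cap k ` X)" using Inv_Pred[OF fX _ len2] by blast
  have "Pred P (map (cap k) xs) \<in> Lam k w" using vp len by (simp add: pp VP'_Lam Lam_iff[OF c])
  then have "Pred P (map (cap k) xs) \<in> Lam k w'" using eq i by blast
  then show ?thesis using len qq kk by (simp add: VP'_Lam Lam_iff[OF c])
qed

lemma cap_img_id: "\<forall>t\<in>X. dep t \<le> k \<Longrightarrow> cap k ` X = X"
proof -
  assume a: "\<forall>t\<in>X. dep t \<le> k"
  have "cap k ` X = (\<lambda>t. t) ` X" using a cap_id by (intro image_cong) auto
  then show ?thesis by simp
qed

lemma cap0_comp: "cap 0 \<circ> Nx = cap 0" by (rule ext) simp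

lemma map_cap0_Nx: "map (cap 0) (map Nx xs) = map (cap 0) xs" by simp
lemma map_capS_Nx: "map (cap (Suc j)) (map Nx xs) = map Nx (map (cap j) xs)" by simp

lemma new_C6: "q \<in> W' \<Longrightarrow> length xs = ar P \<Longrightarrow> (q \<in> VP' P (map Nx xs) \<longleftrightarrow> g' q \<in> VP' P xs)"
proof -
  assume q: "q \<in> W'" and len: "length xs = ar P"
  obtain k w where qq: "q = (k, Lam k w)" "k \<le> N" "w \<in> W" using W'_cases[OF q] by blast
  show ?thesis
  proof (cases k)
    case 0
    then show ?thesis using len qq by (simp add: g'_0 VP'_Lam cap0_comp)
  next
    case (Suc j)
    have len2: "length (map (cap j) xs) = ar P" using len by simp
    have gw: "g w \<in> W" using gmD(2)[OF gm qq(3)] .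
    show ?thesis using len qq Suc gmD(11)[OF gm qq(3) len2] gw
      by (simp add: g'_Suc VP'_Lam map_capS_Nx del: map_map)
  qed
qed

lemma new_C7: "fne X \<Longrightarrow> p \<in> W' \<Longrightarrow> q \<in> W' \<Longrightarrow> (p, q) \<in> E' (Nx ` X) \<Longrightarrow> (g' p, g' q) \<in> E' X"
proof -
  assume X: "fne X" and p: "p \<in> W'" and q: "q \<in> W'" and pq: "(p, q) \<in> E' (Nx ` X)"
  obtain k w where pp: "p = (k, Lam k w)" "k \<le> N" "w \<in> W" using W'_cases[OF p] by blast
  obtain k' w' where qq: "q = (k', Lam k' w')" "k' \<le> N" "w' \<in> W" using W'_cases[OF q] by blast
  have kk: "k' = k" and ag: "agree k (Nx ` X) w w'" using pq by (simp_all add: pp qq E'_iff)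
  show ?thesis
  proof (cases k)
    case 0
    have "agree 0 X w w'" using ag unfolding 0 agree_def by (simp add: cap0_Nx_img)
    then show ?thesis using pp qq kk 0 by (simp add: g'_0 E'_iff)
  next
    case (Suc j)
    have gw: "g w \<in> W" "g w' \<in> W" using gmD(2)[OF gm] pp(3) qq(3) by auto
    have "agree j X (g w) (g w')" unfolding agree_def
    proof (intro allI impI)
      fix Z assume Z: "Z \<noteq> {}" "Z \<subseteq> T j" "depS VD (g w) (cap j ` X) Z"
      have fZ: "fne Z" using fneT[OF Z(1,2)] .
      have "depS VD w (Nx ` cap j ` X) (Nx ` Z)" using gmD(13)[OF gm fne_cap[OF X] fZ pp(3) Z(3)] .
      then have d: "depS VD w (cap (Suc j) ` Nx ` X) (Nx ` Z)" by (simp add: cap_Nx_img)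
      have NZ: "Nx ` Z \<noteq> {}" "Nx ` Z \<subseteq> T (Suc j)" using Z by (auto simp: T_def)
      have eq: "Lam (Suc j) w \<inter> Inv (Nx ` Z) = Lam (Suc j) w' \<inter> Inv (Nx ` Z)"
        using ag[unfolded agree_def Suc, rule_format, OF NZ d] .
      show "Lam j (g w) \<inter> Inv Z = Lam j (g w') \<inter> Inv Z"
      proof (intro set_eqI iffI)
        fix \<chi> assume "\<chi> \<in> Lam j (g w) \<inter> Inv Z"
        then have c: "\<chi> \<in> Cl j" "S (g w) \<chi>" "\<chi> \<in> Inv Z" unfolding Lam_def by auto
        then have "Next \<chi> \<in> Lam (Suc j) w \<inter> Inv (Nx ` Z)"
          using Inv_Next[OF fZ] by (simp add: Lam_def)
        then have "Next \<chi> \<in> Lam (Suc j) w'" using eq by blast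
        then show "\<chi> \<in> Lam j (g w') \<inter> Inv Z" using c by (simp add: Lam_def)
      next
        fix \<chi> assume "\<chi> \<in> Lam j (g w') \<inter> Inv Z"
        then have c: "\<chi> \<in> Cl j" "S (g w') \<chi>" "\<chi> \<in> Inv Z" unfolding Lam_def by auto
        then have "Next \<chi> \<in> Lam (Suc j) w' \<inter> Inv (Nx ` Z)"
          using Inv_Next[OF fZ] by (simp add: Lam_def)
        then have "Next \<chi> \<in> Lam (Suc j) w" using eq by blast
        then show "\<chi> \<in> Lam j (g w) \<inter> Inv Z" using c by (simp add: Lam_def)
      qed
    qed
    then show ?thesis using pp qq kk Suc gw by (simp add: g'_Suc E'_iff)
  qed
qed

lemma new_C8: "fne X \<Longrightarrow> fne Y \<Longrightarrow> q \<in> W' \<Longrightarrow> depS VD' (g' q) X Y \<Longrightarrow> depS VD' q (Nx ` X) (Nx ` Y)"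
proof -
  assume X: "fne X" and Y: "fne Y" and q: "q \<in> W'" and d: "depS VD' (g' q) X Y"
  obtain k w where qq: "q = (k, Lam k w)" "k \<le> N" "w \<in> W" using W'_cases[OF q] by blast
  show ?thesis
  proof (cases k)
    case 0
    then show ?thesis using d qq by (simp add: g'_0 depS'_Lam cap0_Nx_img)
  next
    case (Suc j)
    have gw: "g w \<in> W" using gmD(2)[OF gm qq(3)] .
    have "depS VD (g w) (cap j ` X) (cap j ` Y)" using d qq Suc gw by (simp add: g'_Suc depS'_Lam)
    then have "depS VD w (Nx ` cap j ` X) (Nx ` cap j ` Y)"
      using gmD(13)[OF gm fne_cap[OF X] fne_cap[OF Y] qq(3)] by blast
    then show ?thesis using qq Suc by (simp add: depS'_Lam cap_Nx_img)
  qed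
qed

lemma new_g: "q \<in> W' \<Longrightarrow> g' q \<in> W'"
proof -
  assume q: "q \<in> W'"
  obtain k w where qq: "q = (k, Lam k w)" "k \<le> N" "w \<in> W" using W'_cases[OF q] by blast
  show ?thesis
  proof (cases k)
    case 0 then show ?thesis using q qq by (simp add: g'_0)
  next
    case (Suc j) then show ?thesis using qq gmD(2)[OF gm qq(3)] by (simp add: g'_Suc W'_mem)
  qed
qed

lemma new_model: "gen_model ar W' g' E' VP' VD'"
  unfolding gen_model_def
proof (intro conjI)
  show "W' \<noteq> {}" using gmD(1)[OF gm] W'_mem by blast
  show "\<forall>s\<in>W'. g' s \<in> W'" using new_g by blast
  show "\<forall>P xs. length xs = ar P \<longrightarrow> VP' P xs \<subseteq> W'" unfolding VP'_def by blast
  show "\<forall>X y. fne X \<longrightarrow> VD' X y \<subseteq> W'" unfolding VD'_def by blast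
  show "\<forall>X. fne X \<longrightarrow> equiv W' (E' X)" using new_equiv by blast
  show "\<forall>X s x. fne X \<longrightarrow> s \<in> W' \<longrightarrow> x \<in> X \<longrightarrow> s \<in> VD' X x" using new_C3a by blast
  show "\<forall>X Y Z s. fne X \<longrightarrow> fne Y \<longrightarrow> fne Z \<longrightarrow> s \<in> W' \<longrightarrow>
         depS VD' s X Y \<longrightarrow> depS VD' s Y Z \<longrightarrow> depS VD' s X Z" using new_C3b by blast
  show "\<forall>s x. s \<in> W' \<longrightarrow> s \<in> VD' (range Var) (Nx x)" using new_C3c by blast
  show "\<forall>X Y s w. fne X \<longrightarrow> fne Y \<longrightarrow> s \<in> W' \<longrightarrow> w \<in> W' \<longrightarrow> (s, w) \<in> E' X \<longrightarrow>
         depS VD' s X Y \<longrightarrow> depS VD' w X Y \<and> (s, w) \<in> E' Y" using new_C4 by blast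
  show "\<forall>X s w P xs. fne X \<longrightarrow> s \<in> W' \<longrightarrow> w \<in> W' \<longrightarrow> length xs = ar P \<longrightarrow>
         (s, w) \<in> E' X \<longrightarrow> s \<in> VP' P xs \<longrightarrow> set xs \<subseteq> X \<longrightarrow> w \<in> VP' P xs" using new_C5 by blast
  show "\<forall>s P xs. s \<in> W' \<longrightarrow> length xs = ar P \<longrightarrow>
         (s \<in> VP' P (map Nx xs) \<longleftrightarrow> g' s \<in> VP' P xs)" using new_C6 by blast
  show "\<forall>X s w. fne X \<longrightarrow> s \<in> W' \<longrightarrow> w \<in> W' \<longrightarrow>
         (s, w) \<in> E' (Nx ` X) \<longrightarrow> (g' s, g' w) \<in> E' X" using new_C7 by blast
  show "\<forall>X Y s. fne X \<longrightarrow> fne Y \<longrightarrow> s \<in> W' \<longrightarrow>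
         depS VD' (g' s) X Y \<longrightarrow> depS VD' s (Nx ` X) (Nx ` Y)" using new_C8 by blast
qed

lemma truth: "wf_fm ar \<psi> \<Longrightarrow> subs \<psi> \<subseteq> subs \<phi> \<Longrightarrow> ok k \<psi> \<Longrightarrow> k \<le> N \<Longrightarrow> w \<in> W \<Longrightarrow>
   sat W' g' E' VP' VD' (k, Lam k w) \<psi> \<longleftrightarrow> S w \<psi>"
proof (induction \<psi> arbitrary: k w)
  case (Pred P xs)
  have "map (cap k) xs = xs" using Pred.prems(3) by (intro map_idI) (simp add: cap_id)
  then show ?case using Pred.prems VP'_Lam[of w k xs P] by simp
next
  case (Neg \<psi>) then show ?case by simp
next
  case (Conj \<psi>1 \<psi>2) then show ?case by simp
next
  case (Next \<psi>)
  then obtain j where j: "k = Suc j" by (cases k) auto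
  have gw: "g w \<in> W" using gmD(2)[OF gm Next.prems(5)] .
  have "sat W' g' E' VP' VD' (j, Lam j (g w)) \<psi> \<longleftrightarrow> S (g w) \<psi>"
    using Next.IH[of j "g w"] Next.prems j gw by simp
  then show ?case using j g'_Suc[OF Next.prems(5)] by simp
next
  case (DMod X \<psi>)
  have X: "fne X" using DMod.prems(1) by simp
  have capX: "cap k ` X = X" by (rule cap_img_id) (use DMod.prems(3) in simp)
  have w: "w \<in> W" and kN: "k \<le> N" using DMod.prems by auto
  have p: "wf_fm ar \<psi>" "subs \<psi> \<subseteq> subs \<phi>" "ok k \<psi>" using DMod.prems by auto
  have IH: "\<And>w'. w' \<in> W \<Longrightarrow> sat W' g' E' VP' VD' (k, Lam k w') \<psi> \<longleftrightarrow> S w' \<psi>"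
    using DMod.IH[OF p(1) p(2) p(3) kN] .
  have inCl: "DMod X \<psi> \<in> Cl k" using DMod.prems(2) Cl_subs by simp
  show ?case
  proof
    assume L: "sat W' g' E' VP' VD' (k, Lam k w) (DMod X \<psi>)"
    show "S w (DMod X \<psi>)"
    proof (simp only: sat.simps, intro ballI impI)
      fix w' assume w': "w' \<in> W" and ww': "(w, w') \<in> E X"
      have "agree k X w w'" unfolding agree_def
      proof (intro allI impI)
        fix Y assume Y: "Y \<noteq> {}" "Y \<subseteq> T k" "depS VD w (cap k ` X) Y"
        have "depS VD w X Y" using Y(3) capX by simp
        then have EY: "(w, w') \<in> E Y" using gmD(9)[OF gm X fneT[OF Y(1,2)] w w' ww'] by blast
        show "Lam k w \<inter> Inv Y = Lam k w' \<inter> Inv Y" by (rule Lam_Inv_eq[OF w w' EY])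
      qed
      note agr = this
      have rel: "((k, Lam k w), (k, Lam k w')) \<in> E' X"
        by (subst E'_iff[OF w w']) (simp add: kN agr)
      have mem: "(k, Lam k w') \<in> W'" using W'_mem[OF w'] kN by simp
      have L': "\<forall>t\<in>W'. ((k, Lam k w), t) \<in> E' X \<longrightarrow> sat W' g' E' VP' VD' t \<psi>"
        using L by (simp only: sat.simps)
      have "sat W' g' E' VP' VD' (k, Lam k w') \<psi>" using L'[rule_format, OF mem rel] .
      then show "S w' \<psi>" using IH[OF w'] by simp
    qed
  next
    assume R: "S w (DMod X \<psi>)"
    show "sat W' g' E' VP' VD' (k, Lam k w) (DMod X \<psi>)"
    proof (simp only: sat.simps, intro ballI impI)
      fix q assume q: "q \<in> W'" and rel: "((k, Lam k w), q) \<in> E' X"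
      obtain k' w' where qq: "q = (k', Lam k' w')" "k' \<le> N" "w' \<in> W" using W'_cases[OF q] by blast
      have rel': "((k, Lam k w), (k', Lam k' w')) \<in> E' X" using rel qq(1) by simp
      have kk: "k' = k" and ag: "agree k X w w'" using rel' E'_iff[OF w qq(3)] by blast+
      have XT: "X \<subseteq> T k" using DMod.prems(3) by (auto simp: T_def)
      have dX: "depS VD w (cap k ` X) X" unfolding depS_def capX using gmD(6)[OF gm X w] by blast
      have XX: "X \<noteq> {}" using X by (simp add: fne_def)
      have eq: "Lam k w \<inter> Inv X = Lam k w' \<inter> Inv X"
        using ag[unfolded agree_def, rule_format, of X] XT dX XX by simp
      have "DMod X \<psi> \<in> Lam k w" using R Lam_iff[OF inCl] by simp
      then have "DMod X \<psi> \<in> Lam k w'" using eq Inv_DMod[OF X] by blast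
      then have "S w' (DMod X \<psi>)" using Lam_iff[OF inCl] by simp
      then have "\<forall>t\<in>W. (w', t) \<in> E X \<longrightarrow> S t \<psi>" by (simp only: sat.simps)
      then have "S w' \<psi>" using Erefl[OF X qq(3)] qq(3) by blast
      then have "sat W' g' E' VP' VD' (k, Lam k w') \<psi>" using IH[OF qq(3)] by simp
      then show "sat W' g' E' VP' VD' q \<psi>" using qq(1) kk by simp
    qed
  qed
next
  case (Dep X y)
  have X: "fne X" using Dep.prems(1) by simp
  have capX: "cap k ` X = X" by (rule cap_img_id) (use Dep.prems(3) in simp)
  have capy: "cap k y = y" by (rule cap_id) (use Dep.prems(3) in simp)
  show ?case using VD'_Lam[of w k X y] Dep.prems capX capy by simp
qed

end

theorem theorem4p3:
  fixes \<phi> :: "('v::finite, 'p::finite) fm" and ar :: "'p \<Rightarrow> nat"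
    and W :: "'w set"
  assumes "wf_fm ar \<phi>"
    and "gen_model ar W g E VP VD"
    and "s \<in> W"
    and "sat W g E VP VD s \<phi>"
  shows "\<exists>(W' :: nat set) g' E' VP' VD' s'. finite W' \<and> gen_model ar W' g' E' VP' VD'
           \<and> s' \<in> W' \<and> sat W' g' E' VP' VD' s' \<phi>"
proof -
  obtain N where okN: "ok N \<phi>" using ok_ex[OF assms(1)] by blast
  interpret F: fmp ar W g E VP VD \<phi> N by (rule fmp.intro) (rule assms(2))
  obtain h :: "nat \<times> ('v, 'p) fm set \<Rightarrow> nat" and n where h: "h ` F.W' = {i. i < n}" "inj_on h F.W'"
    using finite_imp_inj_to_nat_seg[OF F.finite_W'] by blast
  have subE: "\<And>X. F.E' X \<subseteq> F.W' \<times> F.W'" unfolding F.E'_def by blast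
  have subP: "\<And>P xs. F.VP' P xs \<subseteq> F.W'" unfolding F.VP'_def by blast
  have subD: "\<And>X y. F.VD' X y \<subseteq> F.W'" unfolding F.VD'_def by blast
  note T = transfer_model[OF F.new_model h(2) subE subP subD, of \<phi>]
  have s0: "(N, F.Lam N s) \<in> F.W'" using F.W'_mem[OF assms(3)] by simp
  have tr: "sat F.W' F.g' F.E' F.VP' F.VD' (N, F.Lam N s) \<phi>"
    using F.truth[OF assms(1) subset_refl okN le_refl assms(3)] assms(4) by simp
  show ?thesis
  proof (intro exI conjI)
    show "finite (h ` F.W')" using F.finite_W' by simp
    show "gen_model ar (h ` F.W') (\<lambda>n. h (F.g' (inv_into F.W' h n))) (\<lambda>X. map_prod h h ` F.E' X)
      (\<lambda>P xs. h ` F.VP' P xs) (\<lambda>X y. h ` F.VD' X y)" using T by blast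
    show "h (N, F.Lam N s) \<in> h ` F.W'" using s0 by blast
    show "sat (h ` F.W') (\<lambda>n. h (F.g' (inv_into F.W' h n))) (\<lambda>X. map_prod h h ` F.E' X)
      (\<lambda>P xs. h ` F.VP' P xs) (\<lambda>X y. h ` F.VD' X y) (h (N, F.Lam N s)) \<phi>"
      using T s0 tr by blast
  qed
qed

end
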